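(* Let $(X,Y,Z)$ be jointly distributed with $X\in\mathcal X$, $Y\in\mathcal Y$ (a finite set of classes, indexed so that "smallest index" is meaningful) and $Z\in\{0,1\}^K$, with $\Pr(Z_k=1)>0$ for all $k\in[K]$. Let $\mathbb P_X$ be the marginal of $X$. Let $r:\mathcal X\times\mathcal Y\to[0,\infty)$ be a pointwise risk, and let $g(x,k)=\Pr(Z_k=1\mid X=x)$. Let $\mathcal C=\{(y_1,\mathcal I_1),\dots,(y_C,\mathcal I_C)\}$ be fairness constraints and $\alpha\in[0,1]$. Assume the uniqueness assumption holds for $(r,g)$ under $\mathbb P_X$. Let $\{\psi_{c,k}:c\in[C],k\in\mathcal I_c\}$ be (the $\psi$-part of) a maximizer of the Dual LP$(r,g,\mathbb P_X,\mathcal C,\alpha)$. Then the classifier $$h(x)=\operatorname*{argmin}_{y\in\mathcal Y}\Big(r(x,y)+\sum_{k\in[K]}g(x,k)w(y,k)\Big),\qquad w(y,k)=-\sum_{c\in[C]}\mathbf 1[y_c=y,\,k\in\mathcal I_c]\frac{\psi_{c,k}}{\Pr(Z_k=1)},$$ (ties broken to the minimizing class with the smallest index) is a minimizer of $$\min_{h:\mathcal X\to\mathcal Y}\mathbb E[r(X,h(X))]\quad\text{subject to } h \text{ satisfying } \alpha\text{-group fairness w.r.t. } \mathcal C,$$ where the minimum is over (possibly randomized) classifiers.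
   Context: Fairness constraints: $\mathcal C=\{(y_c,\mathcal I_c)\}_{c\in[C]}$ with $y_c\in\mathcal Y$ and $\mathcal I_c\subseteq[K]$. A (randomized) classifier $h:\mathcal X\to\mathcal Y$ satisfies $\alpha$-group fairness w.r.t. $\mathcal C$ if $\max_{k,k'\in\mathcal I_c}|\Pr(h(X)=y_c\mid Z_k=1)-\Pr(h(X)=y_c\mid Z_{k'}=1)|\le\alpha$ for all $c\in[C]$ (the randomness of $h$ given $X$ is independent of $(Y,Z)$). Dual LP$(r,g,P,\mathcal C,\alpha)$ for a distribution $P$ on $\mathcal X$: maximize over $\phi:\mathcal X\to\mathbb R$ and reals $\psi=\{\psi_{c,k}:c\in[C],k\in\mathcal I_c\}$ the objective $\mathbb E_{X\sim P}[\phi(X)]-\frac\alpha2\sum_{c\in[C]}\sum_{k\in\mathcal I_c}|\psi_{c,k}|$ subject to $\phi(x)+\sum_{c:y_c=y}\sum_{k\in\mathcal I_c}g(x,k)\frac{\psi_{c,k}}{\mathbb E_{X\sim P}[g(X,k)]}\le r(x,y)$ for all $x\in\mathcal X,y\in\mathcal Y$, and $\sum_{k\in\mathcal I_c}\psi_{c,k}=0$ for all $c$. (For the Bayes $g$ and $P=\mathbb P_X$, $\mathbb E_P[g(X,k)]=\Pr(Z_k=1)$.) Uniqueness assumption for $(r,g)$ under $P$: for every $w:\mathcal Y\times[K]\to\mathbb R$, the set $\operatorname{argmin}_{y\in\mathcal Y}\big(r(X,y)-\sum_k g(X,k)w(y,k)\big)$ has exactly one element for $P$-almost every $X$. *)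

theory Defs
  imports "HOL-Probability.Probability"
begin

text \<open>Classes form a finite linearly ordered type 'y; the index set [K] is {..<K};
  constraints are indexed by c < C with class yc c and group index set Ic c.
  Z :: 'a => nat => bool, Z w k means Z_k = 1.\<close>

definition cond_prob_version ::
  "'a measure \<Rightarrow> 'x measure \<Rightarrow> ('a \<Rightarrow> 'x) \<Rightarrow> ('a \<Rightarrow> nat \<Rightarrow> bool) \<Rightarrow> nat
   \<Rightarrow> ('x \<Rightarrow> nat \<Rightarrow> real) \<Rightarrow> bool" where
  "cond_prob_version M N X Z K g \<longleftrightarrow>
     (\<forall>k<K. (\<lambda>x. g x k) \<in> borel_measurable N \<and>
        integrable (distr M N X) (\<lambda>x. g x k) \<and>
        (\<forall>A\<in>sets N. (\<integral>x. indicator A x * g x k \<partial>distr M N X)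
                       = measure M {\<omega>\<in>space M. X \<omega> \<in> A \<and> Z \<omega> k}))"

text \<open>A randomized classifier: x maps to a distribution over classes, measurably in x.
  A deterministic classifier h corresponds to (\<lambda>x. return_pmf (h x)).\<close>
definition randomized_classifier :: "'x measure \<Rightarrow> ('x \<Rightarrow> 'y pmf) \<Rightarrow> bool" where
  "randomized_classifier N H \<longleftrightarrow> (\<forall>y. (\<lambda>x. pmf (H x) y) \<in> borel_measurable N)"

text \<open>Pr(h(X) = y | Z_k = 1), the randomness of h given X being independent of (Y,Z).\<close>
definition cond_pred_prob ::
  "'a measure \<Rightarrow> ('a \<Rightarrow> 'x) \<Rightarrow> ('a \<Rightarrow> nat \<Rightarrow> bool) \<Rightarrow> ('x \<Rightarrow> 'y pmf) \<Rightarrow> 'y \<Rightarrow> nat \<Rightarrow> real" where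
  "cond_pred_prob M X Z H y k =
     (\<integral>\<omega>. pmf (H (X \<omega>)) y * indicator {\<omega>\<in>space M. Z \<omega> k} \<omega> \<partial>M)
       / measure M {\<omega>\<in>space M. Z \<omega> k}"

definition group_fair ::
  "'a measure \<Rightarrow> ('a \<Rightarrow> 'x) \<Rightarrow> ('a \<Rightarrow> nat \<Rightarrow> bool) \<Rightarrow> nat \<Rightarrow> (nat \<Rightarrow> 'y) \<Rightarrow> (nat \<Rightarrow> nat set)
   \<Rightarrow> real \<Rightarrow> ('x \<Rightarrow> 'y pmf) \<Rightarrow> bool" where
  "group_fair M X Z C yc Ic \<alpha> H \<longleftrightarrow>
     (\<forall>c<C. \<forall>k\<in>Ic c. \<forall>k'\<in>Ic c.
        \<bar>cond_pred_prob M X Z H (yc c) k - cond_pred_prob M X Z H (yc c) k'\<bar> \<le> \<alpha>)"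

definition risk :: "'x measure \<Rightarrow> ('x \<Rightarrow> 'y::finite \<Rightarrow> real) \<Rightarrow> ('x \<Rightarrow> 'y pmf) \<Rightarrow> ennreal" where
  "risk P r H = (\<integral>\<^sup>+x. ennreal (\<Sum>y\<in>UNIV. pmf (H x) y * r x y) \<partial>P)"

definition dual_feasible ::
  "'x measure \<Rightarrow> ('x \<Rightarrow> 'y \<Rightarrow> real) \<Rightarrow> ('x \<Rightarrow> nat \<Rightarrow> real) \<Rightarrow> nat \<Rightarrow> (nat \<Rightarrow> 'y)
   \<Rightarrow> (nat \<Rightarrow> nat set) \<Rightarrow> ('x \<Rightarrow> real) \<Rightarrow> (nat \<Rightarrow> nat \<Rightarrow> real) \<Rightarrow> bool" where
  "dual_feasible P r g C yc Ic \<phi> \<psi> \<longleftrightarrow>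
     \<phi> \<in> borel_measurable P \<and> integrable P \<phi> \<and>
     (\<forall>x\<in>space P. \<forall>y.
        \<phi> x + (\<Sum>c\<in>{c. c < C \<and> yc c = y}. \<Sum>k\<in>Ic c.
                  g x k * \<psi> c k / (\<integral>x'. g x' k \<partial>P)) \<le> r x y) \<and>
     (\<forall>c<C. (\<Sum>k\<in>Ic c. \<psi> c k) = 0)"

definition dual_objective ::
  "'x measure \<Rightarrow> real \<Rightarrow> nat \<Rightarrow> (nat \<Rightarrow> nat set) \<Rightarrow> ('x \<Rightarrow> real) \<Rightarrow> (nat \<Rightarrow> nat \<Rightarrow> real) \<Rightarrow> real" where
  "dual_objective P \<alpha> C Ic \<phi> \<psi> =
     (\<integral>x. \<phi> x \<partial>P) - \<alpha> / 2 * (\<Sum>c<C. \<Sum>k\<in>Ic c. \<bar>\<psi> c k\<bar>)"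

definition dual_maximizer ::
  "'x measure \<Rightarrow> ('x \<Rightarrow> 'y \<Rightarrow> real) \<Rightarrow> ('x \<Rightarrow> nat \<Rightarrow> real) \<Rightarrow> nat \<Rightarrow> (nat \<Rightarrow> 'y)
   \<Rightarrow> (nat \<Rightarrow> nat set) \<Rightarrow> real \<Rightarrow> ('x \<Rightarrow> real) \<Rightarrow> (nat \<Rightarrow> nat \<Rightarrow> real) \<Rightarrow> bool" where
  "dual_maximizer P r g C yc Ic \<alpha> \<phi> \<psi> \<longleftrightarrow>
     dual_feasible P r g C yc Ic \<phi> \<psi> \<and>
     (\<forall>\<phi>' \<psi>'. dual_feasible P r g C yc Ic \<phi>' \<psi>' \<longrightarrow>
        dual_objective P \<alpha> C Ic \<phi>' \<psi>' \<le> dual_objective P \<alpha> C Ic \<phi> \<psi>)"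

definition uniqueness_assumption ::
  "'x measure \<Rightarrow> ('x \<Rightarrow> 'y \<Rightarrow> real) \<Rightarrow> ('x \<Rightarrow> nat \<Rightarrow> real) \<Rightarrow> nat \<Rightarrow> bool" where
  "uniqueness_assumption P r g K \<longleftrightarrow>
     (\<forall>w :: 'y \<Rightarrow> nat \<Rightarrow> real. AE x in P.
        card {y. \<forall>y'. r x y - (\<Sum>k<K. g x k * w y k) \<le> r x y' - (\<Sum>k<K. g x k * w y' k)} = 1)"

definition fair_weights ::
  "'a measure \<Rightarrow> ('a \<Rightarrow> nat \<Rightarrow> bool) \<Rightarrow> nat \<Rightarrow> (nat \<Rightarrow> 'y) \<Rightarrow> (nat \<Rightarrow> nat set)
   \<Rightarrow> (nat \<Rightarrow> nat \<Rightarrow> real) \<Rightarrow> 'y \<Rightarrow> nat \<Rightarrow> real" where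
  "fair_weights M Z C yc Ic \<psi> y k =
     - (\<Sum>c<C. if yc c = y \<and> k \<in> Ic c
               then \<psi> c k / measure M {\<omega>\<in>space M. Z \<omega> k} else 0)"

definition plugin_classifier ::
  "('x \<Rightarrow> 'y::linorder \<Rightarrow> real) \<Rightarrow> ('x \<Rightarrow> nat \<Rightarrow> real) \<Rightarrow> nat \<Rightarrow> ('y \<Rightarrow> nat \<Rightarrow> real) \<Rightarrow> 'x \<Rightarrow> 'y" where
  "plugin_classifier r g K w x =
     (LEAST y. \<forall>y'. r x y + (\<Sum>k<K. g x k * w y k) \<le> r x y' + (\<Sum>k<K. g x k * w y' k))"

end

theory Submission
  imports Defs
begin


lemma density_identity:
  fixes M :: "'a measure" and N :: "'x measure" and X :: "'a \<Rightarrow> 'x" and G :: "'x \<Rightarrow> real"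
  assumes M: "prob_space M" and X[measurable]: "X \<in> measurable M N"
    and S[measurable]: "S \<in> sets M"
    and Gm[measurable]: "G \<in> borel_measurable N" and Gi: "integrable (distr M N X) G"
    and Geq: "\<forall>A\<in>sets N. (\<integral>x. indicator A x * G x \<partial>distr M N X) = measure M {\<omega>\<in>space M. X \<omega> \<in> A \<and> \<omega> \<in> S}"
    and f[measurable]: "f \<in> borel_measurable N"
  shows "(\<integral>x. f x * G x \<partial>distr M N X) = (\<integral>\<omega>. f (X \<omega>) * indicator S \<omega> \<partial>M)"
proof -
  let ?P = "distr M N X"
  interpret P: prob_space ?P by (rule prob_space.prob_space_distr[OF M X])
  interpret M: prob_space M by (rule M)
  have nonneg: "AE x in ?P. 0 \<le> G x"
  proof -
    define A where "A = {x\<in>space N. G x < 0}"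
    have A[measurable]: "A \<in> sets N" unfolding A_def by measurable
    have "(\<integral>x. indicator A x * G x \<partial>?P) \<ge> 0" using Geq A by simp
    moreover have "0 \<le> (\<integral>x. - (indicator A x * G x) \<partial>?P)"
      by (rule Bochner_Integration.integral_nonneg) (auto simp: indicator_def A_def)
    ultimately have "(\<integral>x. - (indicator A x * G x) \<partial>?P) = 0" by simp
    moreover have "integrable ?P (\<lambda>x. - (indicator A x * G x))"
      using integrable_mult_indicator[OF _ Gi, of A] A by simp
    ultimately have "AE x in ?P. - (indicator A x * G x) = 0"
      by (subst integral_nonneg_eq_0_iff_AE[symmetric]) (auto simp: indicator_def A_def intro!: AE_I2)
    moreover have "AE x in ?P. x \<in> space N" by (rule AE_I2) simp
    ultimately show ?thesis by eventually_elim (auto simp: indicator_def A_def split: if_splits)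
  qed
  have indi: "\<And>A. A \<in> sets N \<Longrightarrow> integrable ?P (\<lambda>x. indicator A x * G x)"
    using integrable_mult_indicator[OF _ Gi] by simp
  have eq: "density ?P (\<lambda>x. ennreal (G x)) = distr (density M (\<lambda>\<omega>. ennreal (indicator S \<omega>))) N X"
  proof (rule measure_eqI)
    show "sets (density ?P (\<lambda>x. ennreal (G x))) = sets (distr (density M (\<lambda>\<omega>. ennreal (indicator S \<omega>))) N X)" by simp
  next
    fix A assume "A \<in> sets (density ?P (\<lambda>x. ennreal (G x)))"
    then have A[measurable]: "A \<in> sets N" by simp
    have "emeasure (density ?P (\<lambda>x. ennreal (G x))) A = (\<integral>\<^sup>+x. ennreal (G x) * indicator A x \<partial>?P)"
      by (simp add: emeasure_density)
    also have "\<dots> = (\<integral>\<^sup>+x. ennreal (indicator A x * G x) \<partial>?P)"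
      by (intro nn_integral_cong) (auto simp: indicator_def)
    also have "\<dots> = ennreal (\<integral>x. indicator A x * G x \<partial>?P)"
      using nonneg indi[OF A] by (intro nn_integral_eq_integral) (auto simp: indicator_def)
    also have "\<dots> = ennreal (measure M {\<omega>\<in>space M. X \<omega> \<in> A \<and> \<omega> \<in> S})" using Geq A by simp
    also have "\<dots> = emeasure M {\<omega>\<in>space M. X \<omega> \<in> A \<and> \<omega> \<in> S}"
      by (simp add: M.emeasure_eq_measure)
    also have "\<dots> = (\<integral>\<^sup>+\<omega>. indicator {\<omega>\<in>space M. X \<omega> \<in> A \<and> \<omega> \<in> S} \<omega> \<partial>M)"
      by (intro nn_integral_indicator[symmetric]) measurable
    also have "\<dots> = (\<integral>\<^sup>+\<omega>. ennreal (indicator S \<omega>) * indicator (X -` A \<inter> space M) \<omega> \<partial>M)"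
      by (intro nn_integral_cong) (auto simp: indicator_def)
    also have "\<dots> = emeasure (distr (density M (\<lambda>\<omega>. ennreal (indicator S \<omega>))) N X) A"
      by (simp add: emeasure_distr emeasure_density)
    finally show "emeasure (density ?P (\<lambda>x. ennreal (G x))) A = emeasure (distr (density M (\<lambda>\<omega>. ennreal (indicator S \<omega>))) N X) A" .
  qed
  have "(\<integral>x. f x * G x \<partial>?P) = (\<integral>x. G x *\<^sub>R f x \<partial>?P)" by (simp add: mult.commute)
  also have "\<dots> = integral\<^sup>L (density ?P (\<lambda>x. ennreal (G x))) f"
    using nonneg by (intro integral_density[symmetric]) auto
  also have "\<dots> = integral\<^sup>L (distr (density M (\<lambda>\<omega>. ennreal (indicator S \<omega>))) N X) f" by (simp add: eq)
  also have "\<dots> = integral\<^sup>L (density M (\<lambda>\<omega>. ennreal (indicator S \<omega>))) (\<lambda>\<omega>. f (X \<omega>))"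
    by (intro integral_distr) auto
  also have "\<dots> = (\<integral>\<omega>. indicator S \<omega> *\<^sub>R f (X \<omega>) \<partial>M)"
    by (intro integral_density) auto
  also have "\<dots> = (\<integral>\<omega>. f (X \<omega>) * indicator S \<omega> \<partial>M)" by (simp add: mult.commute)
  finally show ?thesis .
qed



locale fs =
  fixes M :: "'a measure" and N :: "'x measure" and X :: "'a \<Rightarrow> 'x"
    and Z :: "'a \<Rightarrow> nat \<Rightarrow> bool" and K :: nat
    and r :: "'x \<Rightarrow> 'y::{finite,linorder} \<Rightarrow> real" and g :: "'x \<Rightarrow> nat \<Rightarrow> real"
    and C :: nat and yc :: "nat \<Rightarrow> 'y" and Ic :: "nat \<Rightarrow> nat set" and \<alpha> :: real
    and \<phi> :: "'x \<Rightarrow> real" and \<psi> :: "nat \<Rightarrow> nat \<Rightarrow> real"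
  assumes M: "prob_space M"
    and X[measurable]: "X \<in> measurable M N"
    and Z_ev: "\<forall>k<K. {\<omega>\<in>space M. Z \<omega> k} \<in> sets M"
    and Z_pos: "\<forall>k<K. measure M {\<omega>\<in>space M. Z \<omega> k} > 0"
    and r_nonneg: "\<forall>x y. r x y \<ge> 0"
    and r_meas: "\<forall>y. (\<lambda>x. r x y) \<in> borel_measurable N"
    and g: "cond_prob_version M N X Z K g"
    and Ic: "\<forall>c<C. Ic c \<subseteq> {..<K}"
    and \<alpha>: "0 \<le> \<alpha>" "\<alpha> \<le> 1"
    and uniq: "uniqueness_assumption (distr M N X) r g K"
    and opt: "dual_maximizer (distr M N X) r g C yc Ic \<alpha> \<phi> \<psi>"
begin

abbreviation "P \<equiv> distr M N X"

definition "S k = {\<omega>\<in>space M. Z \<omega> k}"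
definition "p k = (\<integral>x. g x k \<partial>P)"

lemma P_prob: "prob_space P" by (rule prob_space.prob_space_distr[OF M X])

lemma meas_P[simp]: "measurable P B = measurable N B"
  by (intro measurable_cong_sets) auto

lemma r_m[measurable]: "(\<lambda>x. r x y) \<in> borel_measurable N" using r_meas by auto

lemma g_meas: "k < K \<Longrightarrow> (\<lambda>x. g x k) \<in> borel_measurable N"
  using g unfolding cond_prob_version_def by auto
lemma g_int: "k < K \<Longrightarrow> integrable P (\<lambda>x. g x k)"
  using g unfolding cond_prob_version_def by auto
lemma g_eq: "k < K \<Longrightarrow> A \<in> sets N \<Longrightarrow> (\<integral>x. indicator A x * g x k \<partial>P) = measure M {\<omega>\<in>space M. X \<omega> \<in> A \<and> Z \<omega> k}"
  using g unfolding cond_prob_version_def by auto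

lemma IcK: "c < C \<Longrightarrow> k \<in> Ic c \<Longrightarrow> k < K" using Ic by auto
lemma Ic_fin: "c < C \<Longrightarrow> finite (Ic c)" using Ic finite_subset by blast

lemma p_eq: "k < K \<Longrightarrow> p k = measure M {\<omega>\<in>space M. Z \<omega> k}"
proof -
  assume k: "k < K"
  have "p k = (\<integral>x. indicator (space N) x * g x k \<partial>P)"
    unfolding p_def by (intro Bochner_Integration.integral_cong) auto
  also have "\<dots> = measure M {\<omega>\<in>space M. X \<omega> \<in> space N \<and> Z \<omega> k}" using g_eq[OF k] by simp
  also have "{\<omega>\<in>space M. X \<omega> \<in> space N \<and> Z \<omega> k} = {\<omega>\<in>space M. Z \<omega> k}"
    using measurable_space[OF X] by auto
  finally show ?thesis .
qed

lemma p_pos: "k < K \<Longrightarrow> p k > 0" using p_eq Z_pos by auto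

lemma transfer:
  assumes k: "k < K" and f[measurable]: "f \<in> borel_measurable N"
  shows "(\<integral>x. f x * g x k \<partial>P) = (\<integral>\<omega>. f (X \<omega>) * indicator (S k) \<omega> \<partial>M)"
proof (rule density_identity[OF M X])
  show "S k \<in> sets M" using Z_ev k unfolding S_def by auto
  show "(\<lambda>x. g x k) \<in> borel_measurable N" using g_meas[OF k] .
  show "integrable P (\<lambda>x. g x k)" using g_int[OF k] .
  show "\<forall>A\<in>sets N. (\<integral>x. indicator A x * g x k \<partial>P) = measure M {\<omega>\<in>space M. X \<omega> \<in> A \<and> \<omega> \<in> S k}"
  proof
    fix A assume A: "A \<in> sets N"
    have "{\<omega>\<in>space M. X \<omega> \<in> A \<and> \<omega> \<in> S k} = {\<omega>\<in>space M. X \<omega> \<in> A \<and> Z \<omega> k}"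
      unfolding S_def by auto
    then show "(\<integral>x. indicator A x * g x k \<partial>P) = measure M {\<omega>\<in>space M. X \<omega> \<in> A \<and> \<omega> \<in> S k}"
      using g_eq[OF k A] by simp
  qed
qed fact

lemma cpp:
  assumes k: "k < K" and H: "randomized_classifier N H"
  shows "cond_pred_prob M X Z H y k = (\<integral>x. pmf (H x) y * g x k \<partial>P) / p k"
proof -
  have [measurable]: "(\<lambda>x. pmf (H x) y) \<in> borel_measurable N"
    using H unfolding randomized_classifier_def by auto
  have "(\<integral>x. pmf (H x) y * g x k \<partial>P) = (\<integral>\<omega>. pmf (H (X \<omega>)) y * indicator (S k) \<omega> \<partial>M)"
    by (rule transfer[OF k]) measurable
  then show ?thesis
    unfolding cond_pred_prob_def p_eq[OF k] S_def by simp
qed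

definition "Lf D x y = (\<Sum>c\<in>{c. c < C \<and> yc c = y}. \<Sum>k\<in>Ic c. g x k * D c k / p k)"
definition "V D x y = r x y - Lf D x y"
definition "mn D x = Min (range (V D x))"
definition "SA D = (\<Sum>c<C. \<Sum>k\<in>Ic c. \<bar>D c k\<bar>)"
definition "hh = plugin_classifier r g K (fair_weights M Z C yc Ic \<psi>)"


lemma Lf_int: "integrable P (\<lambda>x. Lf D x y)"
  unfolding Lf_def using g_int IcK
  by (auto intro!: integrable_sum integrable_divide integrable_mult_left)

lemma Lf_m[measurable]: "(\<lambda>x. Lf D x y) \<in> borel_measurable N"
  using borel_measurable_integrable[OF Lf_int] by simp

lemma V_m[measurable]: "(\<lambda>x. V D x y) \<in> borel_measurable N"
  unfolding V_def by measurable

lemma mn_m[measurable]: "(\<lambda>x. mn D x) \<in> borel_measurable N"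
  unfolding mn_def by (rule borel_measurable_Min) auto

lemma mn_le: "mn D x \<le> V D x y"
  unfolding mn_def by (rule Min_le) auto

lemma mn_ex: "\<exists>y. mn D x = V D x y"
proof -
  have "mn D x \<in> range (V D x)" unfolding mn_def by (rule Min_in) auto
  then show ?thesis by auto
qed

lemma mn_ge: "(\<And>y. a \<le> V D x y) \<Longrightarrow> a \<le> mn D x"
  using mn_ex by metis


lemma Lf_lin: "Lf (\<lambda>c k. D c k + t * E c k) x y = Lf D x y + t * Lf E x y"
  unfolding Lf_def
  by (simp add: sum.distrib sum_distrib_left algebra_simps add_divide_distrib)

lemma V_lin: "V (\<lambda>c k. D c k + t * E c k) x y = V D x y - t * Lf E x y"
  unfolding V_def Lf_lin by simp

lemma feas_iff: "dual_feasible P r g C yc Ic f D \<longleftrightarrow>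
   f \<in> borel_measurable N \<and> integrable P f \<and> (\<forall>x\<in>space N. f x \<le> mn D x) \<and> (\<forall>c<C. (\<Sum>k\<in>Ic c. D c k) = 0)"
proof -
  have "(\<forall>x\<in>space N. \<forall>y. f x + Lf D x y \<le> r x y) \<longleftrightarrow> (\<forall>x\<in>space N. f x \<le> mn D x)"
  proof (intro iffI ballI allI)
    fix x assume "\<forall>x\<in>space N. \<forall>y. f x + Lf D x y \<le> r x y" "x \<in> space N"
    then show "f x \<le> mn D x" by (intro mn_ge) (auto simp: V_def algebra_simps)
  next
    fix x y assume "\<forall>x\<in>space N. f x \<le> mn D x" "x \<in> space N"
    then have "f x \<le> V D x y" using mn_le order_trans by blast
    then show "f x + Lf D x y \<le> r x y" by (simp add: V_def)
  qed
  then show ?thesis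
    unfolding dual_feasible_def Lf_def p_def by simp
qed


lemma weights_sum:
  "(\<Sum>k<K. g x k * (\<Sum>c<C. if yc c = y \<and> k \<in> Ic c then D c k / q k else 0))
   = (\<Sum>c\<in>{c. c < C \<and> yc c = y}. \<Sum>k\<in>Ic c. g x k * D c k / q k)"
proof -
  have "(\<Sum>k<K. g x k * (\<Sum>c<C. if yc c = y \<and> k \<in> Ic c then D c k / q k else 0))
     = (\<Sum>c<C. \<Sum>k<K. if yc c = y \<and> k \<in> Ic c then g x k * D c k / q k else 0)"
  proof -
    have "\<And>k. g x k * (\<Sum>c<C. if yc c = y \<and> k \<in> Ic c then D c k / q k else 0)
       = (\<Sum>c<C. if yc c = y \<and> k \<in> Ic c then g x k * D c k / q k else 0)"
      by (subst sum_distrib_left) (intro sum.cong refl, simp)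
    then have "(\<Sum>k<K. g x k * (\<Sum>c<C. if yc c = y \<and> k \<in> Ic c then D c k / q k else 0))
       = (\<Sum>k<K. \<Sum>c<C. if yc c = y \<and> k \<in> Ic c then g x k * D c k / q k else 0)"
      by (intro sum.cong refl) 
    also have "\<dots> = (\<Sum>c<C. \<Sum>k<K. if yc c = y \<and> k \<in> Ic c then g x k * D c k / q k else 0)"
      by (rule sum.swap)
    finally show ?thesis .
  qed
  also have "\<dots> = (\<Sum>c<C. if yc c = y then (\<Sum>k\<in>Ic c. g x k * D c k / q k) else 0)"
  proof (intro sum.cong refl)
    fix c assume c: "c \<in> {..<C}"
    show "(\<Sum>k<K. if yc c = y \<and> k \<in> Ic c then g x k * D c k / q k else 0)
       = (if yc c = y then (\<Sum>k\<in>Ic c. g x k * D c k / q k) else 0)"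
    proof (cases "yc c = y")
      case True
      have "(\<Sum>k<K. if yc c = y \<and> k \<in> Ic c then g x k * D c k / q k else 0)
        = (\<Sum>k<K. if k \<in> Ic c then g x k * D c k / q k else 0)" using True by simp
      also have "\<dots> = (\<Sum>k\<in>{..<K} \<inter> Ic c. g x k * D c k / q k)"
        by (rule sum.inter_restrict[symmetric]) simp
      also have "{..<K} \<inter> Ic c = Ic c" using Ic c by auto
      finally show ?thesis using True by simp
    qed simp
  qed
  also have "\<dots> = (\<Sum>c\<in>{c. c < C \<and> yc c = y}. \<Sum>k\<in>Ic c. g x k * D c k / q k)"
    using sum.inter_filter[of "{..<C}" "\<lambda>c. (\<Sum>k\<in>Ic c. g x k * D c k / q k)" "\<lambda>c. yc c = y"]
    proof -
      have "(\<Sum>c<C. if yc c = y then (\<Sum>k\<in>Ic c. g x k * D c k / q k) else 0)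
        = (\<Sum>c\<in>{..<C} \<inter> {c. yc c = y}. \<Sum>k\<in>Ic c. g x k * D c k / q k)"
        by (subst sum.inter_restrict) auto
      also have "{..<C} \<inter> {c. yc c = y} = {c. c < C \<and> yc c = y}" by auto
      finally show ?thesis .
    qed
  finally show ?thesis .
qed


lemma plug_obj: "r x y + (\<Sum>k<K. g x k * fair_weights M Z C yc Ic \<psi> y k) = V \<psi> x y"
proof -
  have "(\<Sum>k<K. g x k * fair_weights M Z C yc Ic \<psi> y k)
     = - (\<Sum>k<K. g x k * (\<Sum>c<C. if yc c = y \<and> k \<in> Ic c then \<psi> c k / measure M {\<omega>\<in>space M. Z \<omega> k} else 0))"
    unfolding fair_weights_def by (simp add: sum_negf)
  also have "\<dots> = - (\<Sum>c\<in>{c. c < C \<and> yc c = y}. \<Sum>k\<in>Ic c. g x k * \<psi> c k / measure M {\<omega>\<in>space M. Z \<omega> k})"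
    by (subst weights_sum) simp
  also have "\<dots> = - Lf \<psi> x y"
    unfolding Lf_def using p_eq IcK by (auto intro!: sum.cong arg_cong[where f=uminus])
  finally show ?thesis unfolding V_def by simp
qed

lemma hh_eq: "hh x = (LEAST y. \<forall>y'. V \<psi> x y \<le> V \<psi> x y')"
  unfolding hh_def plugin_classifier_def plug_obj ..



lemma hh_Min: "hh x = Min {y. \<forall>y'. V \<psi> x y \<le> V \<psi> x y'}"
  and hh_ne: "{y. \<forall>y'. V \<psi> x y \<le> V \<psi> x y'} \<noteq> {}"
proof -
  obtain y0 where "mn \<psi> x = V \<psi> x y0" using mn_ex by blast
  then have ex: "\<forall>y'. V \<psi> x y0 \<le> V \<psi> x y'" using mn_le by metis
  then show ne: "{y. \<forall>y'. V \<psi> x y \<le> V \<psi> x y'} \<noteq> {}" by blast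
  show "hh x = Min {y. \<forall>y'. V \<psi> x y \<le> V \<psi> x y'}"
    unfolding hh_eq using ex by (intro Least_Min) auto
qed

lemma hh_Q: "\<forall>y'. V \<psi> x (hh x) \<le> V \<psi> x y'"
proof -
  have "hh x \<in> {y. \<forall>y'. V \<psi> x y \<le> V \<psi> x y'}" unfolding hh_Min[of x]
    using hh_ne[of x] by (intro Min_in) auto
  then show ?thesis by simp
qed

lemma hh_least: "\<forall>y'. V \<psi> x b \<le> V \<psi> x y' \<Longrightarrow> hh x \<le> b"
  unfolding hh_Min[of x] by (intro Min_le) auto

lemma hh_min: "V \<psi> x (hh x) \<le> V \<psi> x y" using hh_Q by blast

lemma hh_mn: "V \<psi> x (hh x) = mn \<psi> x"
  using hh_Q[of x] by (intro antisym mn_le mn_ge) auto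

lemma hh_m[measurable]: "hh \<in> measurable N (count_space UNIV)"
proof (subst measurable_count_space_eq2_countable, intro conjI ballI)
  show "hh \<in> space N \<rightarrow> UNIV" by simp
  fix a :: 'y
  have "hh -` {a} \<inter> space N = {x\<in>space N. (\<forall>y'\<in>UNIV. V \<psi> x a \<le> V \<psi> x y') \<and> (\<forall>b\<in>{b. b < a}. \<not> (\<forall>y'\<in>UNIV. V \<psi> x b \<le> V \<psi> x y'))}"
  proof (intro set_eqI iffI)
    fix x assume x: "x \<in> hh -` {a} \<inter> space N"
    then have "hh x = a" by simp
    then show "x \<in> {x\<in>space N. (\<forall>y'\<in>UNIV. V \<psi> x a \<le> V \<psi> x y') \<and> (\<forall>b\<in>{b. b < a}. \<not> (\<forall>y'\<in>UNIV. V \<psi> x b \<le> V \<psi> x y'))}"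
      using x hh_Q[of x] hh_least[of x] by (auto simp: not_le[symmetric])
  next
    fix x assume x: "x \<in> {x\<in>space N. (\<forall>y'\<in>UNIV. V \<psi> x a \<le> V \<psi> x y') \<and> (\<forall>b\<in>{b. b < a}. \<not> (\<forall>y'\<in>UNIV. V \<psi> x b \<le> V \<psi> x y'))}"
    then have "hh x \<le> a" using hh_least[of x a] by auto
    moreover have "\<not> hh x < a" using x hh_Q[of x] by auto
    ultimately have "hh x = a" by simp
    then show "x \<in> hh -` {a} \<inter> space N" using x by simp
  qed
  also have "\<dots> \<in> sets N"
  proof -
    have le: "\<And>a b. {x\<in>space N. V \<psi> x a \<le> V \<psi> x b} \<in> sets N" by measurable
    have all: "\<And>a. {x\<in>space N. \<forall>y'\<in>UNIV. V \<psi> x a \<le> V \<psi> x y'} \<in> sets N"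
      by (rule sets.sets_Collect_finite_All) (auto intro: le)
    have nall: "{x\<in>space N. \<forall>b\<in>{b. b < a}. \<not> (\<forall>y'\<in>UNIV. V \<psi> x b \<le> V \<psi> x y')} \<in> sets N"
      by (rule sets.sets_Collect_finite_All) (auto intro: sets.sets_Collect_neg all)
    have "{x\<in>space N. (\<forall>y'\<in>UNIV. V \<psi> x a \<le> V \<psi> x y') \<and> (\<forall>b\<in>{b. b < a}. \<not> (\<forall>y'\<in>UNIV. V \<psi> x b \<le> V \<psi> x y'))}
      = {x\<in>space N. \<forall>y'\<in>UNIV. V \<psi> x a \<le> V \<psi> x y'} \<inter> {x\<in>space N. \<forall>b\<in>{b. b < a}. \<not> (\<forall>y'\<in>UNIV. V \<psi> x b \<le> V \<psi> x y')}"
      by auto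
    then show ?thesis using all[of a] nall by simp
  qed
  finally show "hh -` {a} \<inter> space N \<in> sets N" .
qed

lemma hh_rc: "randomized_classifier N (\<lambda>x. return_pmf (hh x))"
proof -
  have "\<And>y. (\<lambda>x. indicator {y} (hh x) :: real) \<in> borel_measurable N"
    by (rule measurable_compose[OF hh_m]) simp
  then show ?thesis unfolding randomized_classifier_def by simp
qed

lemma sum_swap_y: "(\<Sum>y\<in>UNIV. u y * Lf D x y) = (\<Sum>c<C. u (yc c) * (\<Sum>k\<in>Ic c. g x k * D c k / p k))"
proof -
  let ?F = "\<lambda>c. (\<Sum>k\<in>Ic c. g x k * D c k / p k)"
  have "\<And>y. u y * Lf D x y = (\<Sum>c<C. if yc c = y then u y * ?F c else 0)"
  proof -
    fix y
    have "u y * Lf D x y = (\<Sum>c\<in>{..<C} \<inter> {c. yc c = y}. u y * ?F c)"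
      unfolding Lf_def sum_distrib_left
      by (intro sum.cong) auto
    also have "\<dots> = (\<Sum>c<C. if yc c = y then u y * ?F c else 0)"
      by (subst sum.inter_restrict) auto
    finally show "u y * Lf D x y = (\<Sum>c<C. if yc c = y then u y * ?F c else 0)" .
  qed
  then have "(\<Sum>y\<in>UNIV. u y * Lf D x y) = (\<Sum>y\<in>UNIV. \<Sum>c<C. if yc c = y then u y * ?F c else 0)"
    by simp
  also have "\<dots> = (\<Sum>c<C. \<Sum>y\<in>UNIV. if yc c = y then u y * ?F c else 0)"
    by (rule sum.swap)
  also have "\<dots> = (\<Sum>c<C. u (yc c) * ?F c)"
    by (intro sum.cong refl) simp
  finally show ?thesis .
qed

lemma pg_int: "k < K \<Longrightarrow> (\<lambda>x. pmf (H x) y) \<in> borel_measurable N \<Longrightarrow> integrable P (\<lambda>x. pmf (H x) y * g x k)"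
  by (rule Bochner_Integration.integrable_bound[OF g_int]) (auto intro!: AE_I2 borel_measurable_times g_meas simp: abs_mult pmf_le_1 mult_left_le_one_le)

lemma ELf:
  assumes H: "randomized_classifier N H"
  shows "(\<integral>x. (\<Sum>y\<in>UNIV. pmf (H x) y * Lf D x y) \<partial>P) = (\<Sum>c<C. \<Sum>k\<in>Ic c. D c k * cond_pred_prob M X Z H (yc c) k)"
proof -
  have Hm: "\<And>y. (\<lambda>x. pmf (H x) y) \<in> borel_measurable N" using H unfolding randomized_classifier_def by auto
  have "(\<integral>x. (\<Sum>y\<in>UNIV. pmf (H x) y * Lf D x y) \<partial>P)
     = (\<integral>x. (\<Sum>c<C. \<Sum>k\<in>Ic c. D c k / p k * (pmf (H x) (yc c) * g x k)) \<partial>P)"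
    unfolding sum_swap_y by (intro Bochner_Integration.integral_cong refl sum.cong) (auto simp: sum_distrib_left mult_ac)
  also have "\<dots> = (\<Sum>c<C. \<Sum>k\<in>Ic c. D c k / p k * (\<integral>x. pmf (H x) (yc c) * g x k \<partial>P))"
    using pg_int[OF _ Hm] IcK
    by (simp add: integral_sum integrable_sum)
  also have "\<dots> = (\<Sum>c<C. \<Sum>k\<in>Ic c. D c k * cond_pred_prob M X Z H (yc c) k)"
    using cpp[OF _ H] IcK by (intro sum.cong refl) simp
  finally show ?thesis .
qed

lemma phi_feas: "dual_feasible P r g C yc Ic \<phi> \<psi>" using opt unfolding dual_maximizer_def by auto

lemma phi_le: "x \<in> space N \<Longrightarrow> \<phi> x \<le> mn \<psi> x" using phi_feas unfolding feas_iff by auto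
lemma phi_m[measurable]: "\<phi> \<in> borel_measurable N" using phi_feas unfolding feas_iff by auto
lemma phi_int: "integrable P \<phi>" using phi_feas unfolding feas_iff by auto
lemma psi_rows: "\<forall>c<C. (\<Sum>k\<in>Ic c. \<psi> c k) = 0" using phi_feas unfolding feas_iff by auto

lemma opt_le: "dual_feasible P r g C yc Ic f D \<Longrightarrow> (\<integral>x. f x \<partial>P) - \<alpha> / 2 * SA D \<le> (\<integral>x. \<phi> x \<partial>P) - \<alpha> / 2 * SA \<psi>"
  using opt unfolding dual_maximizer_def dual_objective_def SA_def by auto

lemma phi_ae: "AE x in P. \<phi> x = mn \<psi> x"
proof -
  interpret Pp: prob_space P by (rule P_prob)
  define d where "d x = min (mn \<psi> x - \<phi> x) 1" for x
  have d_m[measurable]: "d \<in> borel_measurable N" unfolding d_def by measurable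
  have d_int: "integrable P d"
    by (rule Bochner_Integration.integrable_bound[of _ "\<lambda>_. 1::real"]) (auto intro!: AE_I2 simp: d_def phi_le)
  have "dual_feasible P r g C yc Ic (\<lambda>x. \<phi> x + d x) \<psi>"
    unfolding feas_iff using psi_rows Bochner_Integration.integrable_add[OF phi_int d_int] by (auto simp: d_def)
  from opt_le[OF this] have "(\<integral>x. \<phi> x + d x \<partial>P) \<le> (\<integral>x. \<phi> x \<partial>P)" by simp
  then have "(\<integral>x. d x \<partial>P) \<le> 0" using d_int phi_int by simp
  moreover have "0 \<le> (\<integral>x. d x \<partial>P)"
    by (rule Bochner_Integration.integral_nonneg) (auto simp: d_def phi_le)
  ultimately have "(\<integral>x. d x \<partial>P) = 0" by simp
  moreover have "AE x in P. 0 \<le> d x" by (rule AE_I2) (auto simp: d_def phi_le)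
  ultimately have "AE x in P. d x = 0"
    using integral_nonneg_eq_0_iff_AE[OF d_int] by blast
  moreover have "AE x in P. x \<in> space N" by (rule AE_I2) simp
  ultimately show ?thesis
  proof eventually_elim
    case (elim x)
    then show ?case using phi_le[of x] by (auto simp: d_def min_def split: if_splits)
  qed
qed

lemma uniq': "AE x in P. card {y. \<forall>y'. V \<psi> x y \<le> V \<psi> x y'} = 1"
proof -
  define w where "w y k = (\<Sum>c<C. if yc c = y \<and> k \<in> Ic c then \<psi> c k / p k else 0)" for y k
  have "\<And>x y. (\<Sum>k<K. g x k * w y k) = Lf \<psi> x y"
    unfolding w_def weights_sum Lf_def ..
  then show ?thesis using uniq unfolding uniqueness_assumption_def V_def
    by (auto dest: spec[of _ w])
qed

lemma Lfhh_m[measurable]: "(\<lambda>x. Lf D x (hh x)) \<in> borel_measurable N"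
  by (rule measurable_compose_countable[OF Lf_m hh_m])

lemma direction:
  assumes rows: "\<forall>c<C. (\<Sum>k\<in>Ic c. D c k) = 0"
    and bnd: "\<And>t. 0 < t \<Longrightarrow> t < 1 \<Longrightarrow> SA (\<lambda>c k. \<psi> c k + t * D c k) - SA \<psi> \<le> t * \<beta>"
  shows "- (\<integral>x. Lf D x (hh x) \<partial>P) \<le> \<alpha> / 2 * \<beta>"
proof -
  interpret Pp: prob_space P by (rule P_prob)
  define t where "t n = inverse (real (Suc n)) / 2" for n
  have t_pos: "0 < t n" "t n < 1" for n
    unfolding t_def by (auto simp: field_simps)
  have t_lim: "t \<longlonglongrightarrow> 0"
    unfolding t_def by (intro tendsto_divide_zero LIMSEQ_inverse_real_of_nat)
  define ps where "ps n = (\<lambda>c k. \<psi> c k + t n * D c k)" for n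
  define s where "s n x = (mn (ps n) x - mn \<psi> x) / t n" for n x
  define B where "B x = (\<Sum>y\<in>UNIV. \<bar>Lf D x y\<bar>)" for x
  have B_int: "integrable P B" unfolding B_def by (intro Bochner_Integration.integrable_sum) (auto intro!: Bochner_Integration.integrable_abs Lf_int)
  have B_m[measurable]: "B \<in> borel_measurable N" unfolding B_def by measurable
  have Vps: "V (ps n) x y = V \<psi> x y - t n * Lf D x y" for n x y
    unfolding ps_def V_lin ..
  have LB: "\<bar>Lf D x y\<bar> \<le> B x" for x y
    unfolding B_def by (rule member_le_sum) auto
  have up: "mn (ps n) x \<le> mn \<psi> x - t n * Lf D x (hh x)" for n x
    using mn_le[of "ps n" x "hh x"] unfolding Vps hh_mn .
  have lo: "mn \<psi> x - t n * B x \<le> mn (ps n) x" for n x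
  proof -
    obtain y where y: "mn (ps n) x = V (ps n) x y" using mn_ex by blast
    have "t n * Lf D x y \<le> t n * B x"
      using LB[of x y] t_pos[of n] by (intro mult_left_mono) auto
    then show ?thesis using y mn_le[of \<psi> x y] unfolding Vps by linarith
  qed
  have diff_bnd: "\<bar>mn (ps n) x - mn \<psi> x\<bar> \<le> t n * B x" for n x
  proof -
    have "- (t n * Lf D x (hh x)) \<le> t n * B x"
      using LB[of x "hh x"] t_pos[of n] mult_left_mono[of "- Lf D x (hh x)" "B x" "t n"] by auto
    then show ?thesis using up[of n x] lo[of x n] by auto
  qed
  have s_bnd: "\<bar>s n x\<bar> \<le> B x" for n x
    using diff_bnd[of n x] t_pos[of n]
    by (simp add: s_def abs_divide pos_divide_le_eq mult.commute)
  have s_m[measurable]: "s n \<in> borel_measurable N" for n unfolding s_def by measurable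
  have diff_int: "integrable P (\<lambda>x. mn (ps n) x - mn \<psi> x)" for n
    by (rule Bochner_Integration.integrable_bound[of _ "\<lambda>x. t n * B x"])
       (auto intro!: AE_I2 B_int simp: diff_bnd order_trans[OF diff_bnd] abs_mult t_pos less_imp_le)
  have s_le: "(\<integral>x. s n x \<partial>P) \<le> \<alpha> / 2 * \<beta>" for n
  proof -
    have feas: "dual_feasible P r g C yc Ic (\<lambda>x. \<phi> x + (mn (ps n) x - mn \<psi> x)) (ps n)"
      unfolding feas_iff
    proof (intro conjI ballI allI impI)
      show "(\<lambda>x. \<phi> x + (mn (ps n) x - mn \<psi> x)) \<in> borel_measurable N" by measurable
      show "integrable P (\<lambda>x. \<phi> x + (mn (ps n) x - mn \<psi> x))"
        by (rule Bochner_Integration.integrable_add[OF phi_int diff_int])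
      fix x assume "x \<in> space N"
      then show "\<phi> x + (mn (ps n) x - mn \<psi> x) \<le> mn (ps n) x" using phi_le[of x] by simp
    next
      fix c assume "c < C"
      then show "(\<Sum>k\<in>Ic c. ps n c k) = 0"
        using rows psi_rows unfolding ps_def by (simp add: sum.distrib sum_distrib_left[symmetric])
    qed
    have "(\<integral>x. \<phi> x + (mn (ps n) x - mn \<psi> x) \<partial>P) = (\<integral>x. \<phi> x \<partial>P) + (\<integral>x. mn (ps n) x - mn \<psi> x \<partial>P)"
      by (rule Bochner_Integration.integral_add[OF phi_int diff_int])
    with opt_le[OF feas] have "(\<integral>x. mn (ps n) x - mn \<psi> x \<partial>P) \<le> \<alpha> / 2 * (SA (ps n) - SA \<psi>)"
      by (simp add: algebra_simps)
    also have "\<dots> \<le> \<alpha> / 2 * (t n * \<beta>)"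
      using bnd[OF t_pos] \<alpha> unfolding ps_def by (intro mult_left_mono) auto
    finally have "(\<integral>x. mn (ps n) x - mn \<psi> x \<partial>P) \<le> \<alpha> / 2 * \<beta> * t n" by (simp add: algebra_simps)
    moreover have "(\<integral>x. s n x \<partial>P) = (\<integral>x. mn (ps n) x - mn \<psi> x \<partial>P) / t n"
      unfolding s_def by simp
    ultimately show ?thesis using t_pos[of n] by (simp add: pos_divide_le_eq)
  qed
  have lim: "AE x in P. (\<lambda>n. s n x) \<longlonglongrightarrow> - Lf D x (hh x)"
    using uniq'
  proof eventually_elim
    case (elim x)
    then obtain a where a: "{y. \<forall>y'. V \<psi> x y \<le> V \<psi> x y'} = {a}" by (rule card_1_singletonE)
    have "hh x \<in> {y. \<forall>y'. V \<psi> x y \<le> V \<psi> x y'}" using hh_Q[of x] by simp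
    then have a': "a = hh x" using a by auto
    have strict: "V \<psi> x (hh x) < V \<psi> x y" if "y \<noteq> hh x" for y
    proof -
      have "y \<notin> {y. \<forall>y'. V \<psi> x y \<le> V \<psi> x y'}" using a a' that by auto
      then obtain y' where "V \<psi> x y' < V \<psi> x y" by (auto simp: not_le)
      then show ?thesis using hh_min[of x y'] by simp
    qed
    have ev: "eventually (\<lambda>n. \<forall>y. y \<noteq> hh x \<longrightarrow> t n * (Lf D x y - Lf D x (hh x)) < V \<psi> x y - V \<psi> x (hh x)) sequentially"
    proof (rule eventually_all_finite)
      fix y
      show "eventually (\<lambda>n. y \<noteq> hh x \<longrightarrow> t n * (Lf D x y - Lf D x (hh x)) < V \<psi> x y - V \<psi> x (hh x)) sequentially"
      proof (cases "y = hh x")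
        case False
        have "(\<lambda>n. t n * (Lf D x y - Lf D x (hh x))) \<longlonglongrightarrow> 0"
          using tendsto_mult_left_zero[OF t_lim] by simp
        from order_tendstoD(2)[OF this, of "V \<psi> x y - V \<psi> x (hh x)"] strict[OF False]
        show ?thesis by (auto elim: eventually_mono)
      qed simp
    qed
    have "eventually (\<lambda>n. s n x = - Lf D x (hh x)) sequentially"
      using ev
    proof eventually_elim
      case (elim n)
      have "mn (ps n) x = V (ps n) x (hh x)"
      proof (rule antisym)
        show "mn (ps n) x \<le> V (ps n) x (hh x)" by (rule mn_le)
        show "V (ps n) x (hh x) \<le> mn (ps n) x"
        proof (rule mn_ge)
          fix y
          show "V (ps n) x (hh x) \<le> V (ps n) x y"
          proof (cases "y = hh x")
            case False
            then show ?thesis using elim unfolding Vps by (auto simp: algebra_simps)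
          qed simp
        qed
      qed
      then show ?case using t_pos[of n] unfolding s_def Vps hh_mn by simp
    qed
    then show ?case by (rule tendsto_eventually)
  qed
  have "(\<lambda>n. \<integral>x. s n x \<partial>P) \<longlonglongrightarrow> (\<integral>x. - Lf D x (hh x) \<partial>P)"
    by (rule integral_dominated_convergence[where w=B]) (auto intro!: AE_I2 B_int lim s_bnd)
  then have "(\<integral>x. - Lf D x (hh x) \<partial>P) \<le> \<alpha> / 2 * \<beta>"
    by (rule LIMSEQ_le_const2) (intro exI allI impI s_le)
  then show ?thesis by simp
qed

abbreviation "Hh \<equiv> (\<lambda>x. return_pmf (hh x))"
abbreviation "Q c k \<equiv> cond_pred_prob M X Z Hh (yc c) k"

lemma sum_ret: "(\<Sum>y\<in>UNIV. pmf (return_pmf (a::'y)) y * F y) = (F a :: real)"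
proof -
  have "(\<Sum>y\<in>UNIV. pmf (return_pmf a) y * F y) = (\<Sum>y\<in>UNIV. if y = a then F y else 0)"
    by (intro sum.cong) (auto simp: indicator_def)
  also have "\<dots> = F a" by (simp add: sum.delta)
  finally show ?thesis .
qed

lemma ELf_hh: "(\<integral>x. Lf D x (hh x) \<partial>P) = (\<Sum>c<C. \<Sum>k\<in>Ic c. D c k * Q c k)"
  using ELf[OF hh_rc, of D] unfolding sum_ret .

lemma SA_tri: "0 \<le> t \<Longrightarrow> SA (\<lambda>c k. \<psi> c k + t * D c k) \<le> SA \<psi> + t * SA D"
  unfolding SA_def sum_distrib_left sum.distrib[symmetric]
  by (intro sum_mono) (auto simp: abs_mult intro: order_trans[OF abs_triangle_ineq])

lemma rowsum_delta: "c < C \<Longrightarrow> (\<Sum>c'<C. \<Sum>k\<in>Ic c'. if c' = c then G k else 0) = (\<Sum>k\<in>Ic c. (G k :: real))"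
proof -
  assume c: "c < C"
  have "(\<Sum>c'<C. \<Sum>k\<in>Ic c'. if c' = c then G k else 0) = (\<Sum>c'<C. if c' = c then (\<Sum>k\<in>Ic c. G k) else 0)"
    by (intro sum.cong) auto
  also have "\<dots> = (\<Sum>k\<in>Ic c. G k)" using c by simp
  finally show ?thesis .
qed

lemma pair_sum: "finite I \<Longrightarrow> k \<in> I \<Longrightarrow> k' \<in> I \<Longrightarrow> k \<noteq> k' \<Longrightarrow>
   (\<Sum>j\<in>I. if j = k' then a else if j = k then b else 0) = (a + b :: real)"
proof -
  assume I: "finite I" "k \<in> I" "k' \<in> I" "k \<noteq> k'"
  have "(\<Sum>j\<in>I. if j = k' then a else if j = k then b else 0) = (\<Sum>j\<in>I. (if j = k' then a else 0) + (if j = k then b else 0))"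
    using I by (intro sum.cong) auto
  also have "\<dots> = a + b" using I by (simp add: sum.distrib)
  finally show ?thesis .
qed

lemma hh_fair_half: assumes c: "c < C" and k: "k \<in> Ic c" and k': "k' \<in> Ic c" shows "Q c k - Q c k' \<le> \<alpha>"
proof (cases "k = k'")
  case True then show ?thesis using \<alpha> by simp
next
  case False
  define D where "D c' j = (if c' = c then (if j = k' then 1 else if j = k then -1 else 0) else (0::real))" for c' j
  have fin: "finite (Ic c)" using Ic_fin c .
  have rows: "\<forall>c'<C. (\<Sum>j\<in>Ic c'. D c' j) = 0"
  proof (intro allI impI)
    fix c' assume "c' < C"
    show "(\<Sum>j\<in>Ic c'. D c' j) = 0"
    proof (cases "c' = c")
      case True
      then show ?thesis unfolding D_def using pair_sum[OF fin k k' False, of 1 "-1"] by simp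
    qed (simp add: D_def)
  qed
  have SAD: "SA D = 2"
  proof -
    have "SA D = (\<Sum>c'<C. \<Sum>j\<in>Ic c'. if c' = c then (if j = k' then 1 else if j = k then 1 else 0) else 0)"
      unfolding SA_def D_def by (intro sum.cong refl) auto
    also have "\<dots> = 2" unfolding rowsum_delta[OF c] pair_sum[OF fin k k' False] by simp
    finally show ?thesis .
  qed
  have "- (\<integral>x. Lf D x (hh x) \<partial>P) \<le> \<alpha> / 2 * 2"
  proof (rule direction[OF rows])
    fix t :: real assume "0 < t" "t < 1"
    then show "SA (\<lambda>c k. \<psi> c k + t * D c k) - SA \<psi> \<le> t * 2" using SA_tri[of t D] SAD by simp
  qed
  moreover have "(\<integral>x. Lf D x (hh x) \<partial>P) = Q c k' - Q c k"
  proof -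
    have "(\<integral>x. Lf D x (hh x) \<partial>P) = (\<Sum>c'<C. \<Sum>j\<in>Ic c'. if c' = c then (if j = k' then Q c j else if j = k then - Q c j else 0) else 0)"
      unfolding ELf_hh D_def by (intro sum.cong refl) auto
    also have "\<dots> = Q c k' + - Q c k"
      unfolding rowsum_delta[OF c]
      using pair_sum[OF fin k k' False, of "Q c k'" "- Q c k"]
      by (smt (verit, ccfv_SIG) sum.cong)
    finally show ?thesis by simp
  qed
  ultimately show ?thesis by simp
qed

lemma hh_fair: "group_fair M X Z C yc Ic \<alpha> Hh"
  unfolding group_fair_def
  using hh_fair_half by (auto simp: abs_le_iff)

lemma slack: "(\<Sum>c<C. \<Sum>k\<in>Ic c. \<psi> c k * Q c k) \<le> - (\<alpha> / 2 * SA \<psi>)"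
proof -
  have rows: "\<forall>c<C. (\<Sum>k\<in>Ic c. - \<psi> c k) = 0" using psi_rows by (simp add: sum_negf)
  have "- (\<integral>x. Lf (\<lambda>c k. - \<psi> c k) x (hh x) \<partial>P) \<le> \<alpha> / 2 * (- SA \<psi>)"
  proof (rule direction[OF rows])
    fix t :: real assume t: "0 < t" "t < 1"
    have "SA (\<lambda>c k. \<psi> c k + t * - \<psi> c k) = (1 - t) * SA \<psi>"
      unfolding SA_def sum_distrib_left
    proof (intro sum.cong refl)
      fix c k
      have "\<bar>\<psi> c k + t * - \<psi> c k\<bar> = \<bar>(1 - t) * \<psi> c k\<bar>" by (simp add: algebra_simps)
      also have "\<dots> = (1 - t) * \<bar>\<psi> c k\<bar>" using t by (simp add: abs_mult)
      finally show "\<bar>\<psi> c k + t * - \<psi> c k\<bar> = (1 - t) * \<bar>\<psi> c k\<bar>" .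
    qed
    then show "SA (\<lambda>c k. \<psi> c k + t * - \<psi> c k) - SA \<psi> \<le> t * - SA \<psi>" by (simp add: algebra_simps)
  qed
  then show ?thesis unfolding ELf_hh by (simp add: sum_negf)
qed

lemma fair_alg:
  fixes a q :: "nat \<Rightarrow> real"
  assumes I: "finite I" and a: "(\<Sum>k\<in>I. a k) = 0" and q: "\<forall>k\<in>I. \<forall>k'\<in>I. \<bar>q k - q k'\<bar> \<le> e"
  shows "- (e / 2 * (\<Sum>k\<in>I. \<bar>a k\<bar>)) \<le> (\<Sum>k\<in>I. a k * q k)"
proof (cases "I = {}")
  case True then show ?thesis by simp
next
  case False
  define m where "m = (Max (q ` I) + Min (q ` I)) / 2"
  have "Max (q ` I) \<in> q ` I" using I False by (intro Max_in) auto
  then obtain k1 where k1: "k1 \<in> I" "q k1 = Max (q ` I)" by auto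
  have "Min (q ` I) \<in> q ` I" using I False by (intro Min_in) auto
  then obtain k2 where k2: "k2 \<in> I" "q k2 = Min (q ` I)" by auto
  have dm: "\<bar>q k - m\<bar> \<le> e / 2" if k: "k \<in> I" for k
  proof -
    have "q k \<le> q k1" using k k1 I by (simp add: Max_ge)
    moreover have "q k2 \<le> q k" using k k2 I by (simp add: Min_le)
    moreover have "\<bar>q k1 - q k2\<bar> \<le> e" using q k1(1) k2(1) by blast
    ultimately show ?thesis unfolding m_def k1(2)[symmetric] k2(2)[symmetric] abs_le_iff by (auto simp: field_simps)
  qed
  have "(\<Sum>k\<in>I. a k * q k) = (\<Sum>k\<in>I. a k * (q k - m)) + m * (\<Sum>k\<in>I. a k)"
    by (simp add: algebra_simps sum.distrib sum_distrib_left sum_distrib_right sum_subtractf)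
  also have "\<dots> = (\<Sum>k\<in>I. a k * (q k - m))" using a by simp
  finally have eq: "(\<Sum>k\<in>I. a k * q k) = (\<Sum>k\<in>I. a k * (q k - m))" .
  have "(\<Sum>k\<in>I. - (e / 2 * \<bar>a k\<bar>)) \<le> (\<Sum>k\<in>I. a k * (q k - m))"
  proof (rule sum_mono)
    fix k assume k: "k \<in> I"
    have "\<bar>a k * (q k - m)\<bar> \<le> \<bar>a k\<bar> * (e / 2)"
      unfolding abs_mult using dm[OF k] by (intro mult_left_mono) auto
    then show "- (e / 2 * \<bar>a k\<bar>) \<le> a k * (q k - m)" by (simp add: abs_le_iff mult.commute)
  qed
  then show ?thesis unfolding eq by (simp add: sum_negf sum_distrib_left)
qed

lemma ennreal_int_le:
  fixes F :: "'x \<Rightarrow> real"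
  assumes "integrable P F"
  shows "ennreal (\<integral>x. F x \<partial>P) \<le> (\<integral>\<^sup>+x. ennreal (F x) \<partial>P)"
proof -
  have "(\<integral>x. F x \<partial>P) \<le> (\<integral>x. max 0 (F x) \<partial>P)"
    using assms by (intro integral_mono) auto
  then have "ennreal (\<integral>x. F x \<partial>P) \<le> ennreal (\<integral>x. max 0 (F x) \<partial>P)" by (rule ennreal_leI)
  also have "\<dots> = (\<integral>\<^sup>+x. ennreal (max 0 (F x)) \<partial>P)"
    using assms by (intro nn_integral_eq_integral[symmetric]) auto
  also have "\<dots> = (\<integral>\<^sup>+x. ennreal (F x) \<partial>P)"
    by (intro nn_integral_cong) (auto simp: max_def ennreal_neg)
  finally show ?thesis .
qed

lemma risk_hh: "risk P r Hh \<le> ennreal ((\<integral>x. \<phi> x \<partial>P) - \<alpha> / 2 * SA \<psi>)"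
proof -
  have Lhh_int: "integrable P (\<lambda>x. Lf \<psi> x (hh x))"
    by (rule Bochner_Integration.integrable_bound[of _ "\<lambda>x. \<Sum>y\<in>UNIV. \<bar>Lf \<psi> x y\<bar>"])
       (auto intro!: AE_I2 Bochner_Integration.integrable_sum Lf_int member_le_sum)
  have ae: "AE x in P. r x (hh x) = \<phi> x + Lf \<psi> x (hh x)"
    using phi_ae by eventually_elim (simp add: hh_mn[symmetric] V_def)
  have "risk P r Hh = (\<integral>\<^sup>+x. ennreal (r x (hh x)) \<partial>P)"
    unfolding risk_def sum_ret ..
  also have "\<dots> = (\<integral>\<^sup>+x. ennreal (\<phi> x + Lf \<psi> x (hh x)) \<partial>P)"
    using ae by (intro nn_integral_cong_AE) (auto elim: eventually_mono)
  also have "\<dots> = ennreal (\<integral>x. \<phi> x + Lf \<psi> x (hh x) \<partial>P)"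
  proof (rule nn_integral_eq_integral)
    show "integrable P (\<lambda>x. \<phi> x + Lf \<psi> x (hh x))"
      by (rule Bochner_Integration.integrable_add[OF phi_int Lhh_int])
    show "AE x in P. 0 \<le> \<phi> x + Lf \<psi> x (hh x)" using ae by eventually_elim (metis r_nonneg)
  qed
  also have "(\<integral>x. \<phi> x + Lf \<psi> x (hh x) \<partial>P) = (\<integral>x. \<phi> x \<partial>P) + (\<Sum>c<C. \<Sum>k\<in>Ic c. \<psi> c k * Q c k)"
    unfolding ELf_hh[symmetric] by (rule Bochner_Integration.integral_add[OF phi_int Lhh_int])
  also have "ennreal \<dots> \<le> ennreal ((\<integral>x. \<phi> x \<partial>P) - \<alpha> / 2 * SA \<psi>)"
    using slack by (intro ennreal_leI) simp
  finally show ?thesis .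
qed

lemma risk_other:
  assumes H: "randomized_classifier N H" and fair: "group_fair M X Z C yc Ic \<alpha> H"
  shows "ennreal ((\<integral>x. \<phi> x \<partial>P) - \<alpha> / 2 * SA \<psi>) \<le> risk P r H"
proof -
  have Hm[measurable]: "\<And>y. (\<lambda>x. pmf (H x) y) \<in> borel_measurable N" using H unfolding randomized_classifier_def by auto
  define F where "F x = \<phi> x + (\<Sum>y\<in>UNIV. pmf (H x) y * Lf \<psi> x y)" for x
  have S_int: "integrable P (\<lambda>x. \<Sum>y\<in>UNIV. pmf (H x) y * Lf \<psi> x y)"
  proof (intro Bochner_Integration.integrable_sum)
    fix y
    show "integrable P (\<lambda>x. pmf (H x) y * Lf \<psi> x y)"
      by (rule Bochner_Integration.integrable_bound[OF Lf_int[of \<psi> y]])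
         (auto intro!: AE_I2 simp: abs_mult pmf_le_1 mult_left_le_one_le)
  qed
  have F_int: "integrable P F" unfolding F_def by (rule Bochner_Integration.integrable_add[OF phi_int S_int])
  have "(\<integral>x. \<phi> x \<partial>P) - \<alpha> / 2 * SA \<psi> \<le> (\<integral>x. \<phi> x \<partial>P) + (\<Sum>c<C. \<Sum>k\<in>Ic c. \<psi> c k * cond_pred_prob M X Z H (yc c) k)"
  proof -
    have "(\<Sum>c<C. - (\<alpha> / 2 * (\<Sum>k\<in>Ic c. \<bar>\<psi> c k\<bar>))) \<le> (\<Sum>c<C. \<Sum>k\<in>Ic c. \<psi> c k * cond_pred_prob M X Z H (yc c) k)"
    proof (rule sum_mono)
      fix c assume "c \<in> {..<C}"
      then have c: "c < C" by simp
      show "- (\<alpha> / 2 * (\<Sum>k\<in>Ic c. \<bar>\<psi> c k\<bar>)) \<le> (\<Sum>k\<in>Ic c. \<psi> c k * cond_pred_prob M X Z H (yc c) k)"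
        using fair c psi_rows Ic_fin[OF c] unfolding group_fair_def by (intro fair_alg) auto
    qed
    then show ?thesis unfolding SA_def by (simp add: sum_negf sum_distrib_left)
  qed
  also have "\<dots> = (\<integral>x. F x \<partial>P)"
    unfolding F_def ELf[OF H, symmetric] by (rule Bochner_Integration.integral_add[OF phi_int S_int, symmetric])
  finally have "ennreal ((\<integral>x. \<phi> x \<partial>P) - \<alpha> / 2 * SA \<psi>) \<le> ennreal (\<integral>x. F x \<partial>P)" by (rule ennreal_leI)
  also have "\<dots> \<le> (\<integral>\<^sup>+x. ennreal (F x) \<partial>P)" by (rule ennreal_int_le[OF F_int])
  also have "\<dots> \<le> risk P r H"
    unfolding risk_def
  proof (rule nn_integral_mono)
    fix x assume x: "x \<in> space P"
    have "F x = (\<Sum>y\<in>UNIV. pmf (H x) y * (\<phi> x + Lf \<psi> x y))"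
    proof -
      have "(\<Sum>y\<in>UNIV. pmf (H x) y) = 1" by (rule sum_pmf_eq_1) auto
      then show ?thesis unfolding F_def by (simp add: distrib_left sum.distrib sum_distrib_right[symmetric])
    qed
    also have "\<dots> \<le> (\<Sum>y\<in>UNIV. pmf (H x) y * r x y)"
    proof (rule sum_mono)
      fix y
      have "\<phi> x \<le> V \<psi> x y" using phi_le[of x] mn_le[of \<psi> x y] x by simp
      then have "\<phi> x + Lf \<psi> x y \<le> r x y" by (simp add: V_def)
      then show "pmf (H x) y * (\<phi> x + Lf \<psi> x y) \<le> pmf (H x) y * r x y" by (intro mult_left_mono) auto
    qed
    finally show "ennreal (F x) \<le> ennreal (\<Sum>y\<in>UNIV. pmf (H x) y * r x y)" by (rule ennreal_leI)
  qed
  finally show ?thesis .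
qed

end

theorem theorem1:
  fixes M :: "'a measure" and N :: "'x measure" and X :: "'a \<Rightarrow> 'x"
    and Z :: "'a \<Rightarrow> nat \<Rightarrow> bool" and K :: nat
    and r :: "'x \<Rightarrow> 'y::{finite,linorder} \<Rightarrow> real" and g :: "'x \<Rightarrow> nat \<Rightarrow> real"
    and C :: nat and yc :: "nat \<Rightarrow> 'y" and Ic :: "nat \<Rightarrow> nat set" and \<alpha> :: real
    and \<phi> :: "'x \<Rightarrow> real" and \<psi> :: "nat \<Rightarrow> nat \<Rightarrow> real"
  assumes M: "prob_space M"
    and X: "X \<in> measurable M N"
    and Z_ev: "\<forall>k<K. {\<omega>\<in>space M. Z \<omega> k} \<in> sets M"
    and Z_pos: "\<forall>k<K. measure M {\<omega>\<in>space M. Z \<omega> k} > 0"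
    and r_nonneg: "\<forall>x y. r x y \<ge> 0"
    and r_meas: "\<forall>y. (\<lambda>x. r x y) \<in> borel_measurable N"
    and g: "cond_prob_version M N X Z K g"
    and Ic: "\<forall>c<C. Ic c \<subseteq> {..<K}"
    and \<alpha>: "0 \<le> \<alpha>" "\<alpha> \<le> 1"
    and uniq: "uniqueness_assumption (distr M N X) r g K"
    and opt: "dual_maximizer (distr M N X) r g C yc Ic \<alpha> \<phi> \<psi>"
  shows "let h = plugin_classifier r g K (fair_weights M Z C yc Ic \<psi>);
             H = (\<lambda>x. return_pmf (h x))
         in randomized_classifier N H \<and> group_fair M X Z C yc Ic \<alpha> H \<and>
            (\<forall>H'. randomized_classifier N H' \<and> group_fair M X Z C yc Ic \<alpha> H'
                   \<longrightarrow> risk (distr M N X) r H \<le> risk (distr M N X) r H')"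
proof -
  have L: "fs M N X Z K r g C yc Ic \<alpha> \<phi> \<psi>"
    using M X Z_ev Z_pos r_nonneg r_meas g Ic \<alpha> uniq opt unfolding fs_def by blast
  have hh_eq: "fs.hh M Z K r g C yc Ic \<psi> = plugin_classifier r g K (fair_weights M Z C yc Ic \<psi>)"
    using fs.hh_def[OF L] by simp
  show ?thesis unfolding Let_def
  proof (intro conjI allI impI)
    show "randomized_classifier N (\<lambda>x. return_pmf (plugin_classifier r g K (fair_weights M Z C yc Ic \<psi>) x))"
      using fs.hh_rc[OF L] unfolding hh_eq .
    show "group_fair M X Z C yc Ic \<alpha> (\<lambda>x. return_pmf (plugin_classifier r g K (fair_weights M Z C yc Ic \<psi>) x))"
      using fs.hh_fair[OF L] unfolding hh_eq .
    fix H' assume H': "randomized_classifier N H' \<and> group_fair M X Z C yc Ic \<alpha> H'"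
    have "risk (distr M N X) r (\<lambda>x. return_pmf (fs.hh M Z K r g C yc Ic \<psi> x)) \<le> risk (distr M N X) r H'"
      using H' by (intro order_trans[OF fs.risk_hh[OF L] fs.risk_other[OF L]]) auto
    then show "risk (distr M N X) r (\<lambda>x. return_pmf (plugin_classifier r g K (fair_weights M Z C yc Ic \<psi>) x)) \<le> risk (distr M N X) r H'"
      unfolding hh_eq .
  qed
qed


end
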